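(* Let $g_c:[0,\infty)\to[0,\infty)$ be a measurable function with $0<K:=\int_0^\infty g_c(u)\,\mathrm{d}u<\infty$, let $\mu_1,\mu_2\in\mathbb{R}$, $\sigma>0$, $\rho\in(-1,1)$, $\boldsymbol{\mu}=(\mu_1,\mu_2)^\top$ and $\boldsymbol{\Sigma}=\begin{pmatrix}\sigma^2&\rho\sigma\\ \rho\sigma&1\end{pmatrix}$. Suppose $(Y^*,U^* )^\top$ has PDF $$f(\boldsymbol{y})=\frac{1}{|\boldsymbol{\Sigma}|^{1/2}\,\pi K}\,g_c\big((\boldsymbol{y}-\boldsymbol{\mu})^\top\boldsymbol{\Sigma}^{-1}(\boldsymbol{y}-\boldsymbol{\mu})\big),\qquad \boldsymbol{y}\in\mathbb{R}^2.$$ Let $V_1,V_2,R,D$ be mutually independent random variables with $\mathbb{P}(V_k=-1)=\mathbb{P}(V_k=1)=1/2$ for $k=1,2$, $D$ having PDF $\frac{2}{\pi\sqrt{1-d^2}}$ on $(0,1)$ and $R$ having PDF $\frac{2r g_c(r^2)}{K}$ on $(0,\infty)$; put $Z_1=RDV_1$, $Z_2=R\sqrt{1-D^2}V_2$, let $f_{Z_1}$ be the PDF of $Z_1$ and $f_{Z_2\mid Z_1}(w\mid z)=f_{Z_1,Z_2}(z,w)/f_{Z_1}(z)$ the conditional PDF of $Z_2$ given $Z_1=z$. Define $$H(x)=\int_{-x}^{\infty} f_{\rho Z_1+\sqrt{1-\rho^2}\,Z_2}(u)\,\mathrm{d}u,$$ and, for $y\in\mathbb{R}$ with $c_y:=(y-\mu_1)/\sigma$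 satisfying $f_{Z_1}(c_y)>0$, $$G_y(x)=\int_{-\infty}^{x} f_{Z_2\mid Z_1}(w\mid c_y)\,\mathrm{d}w .$$ Then $\mathbb{P}(U^*>0)=H(\mu_2)$, and (when this probability is positive) the PDF of $Y^*$ conditional on $U^*>0$ is $$f_{Y^*\mid U^*>0}(y)=\frac{1}{\sigma}\,f_{Z_1}\!\Big(\frac{y-\mu_1}{\sigma}\Big)\,\frac{G_y\Big(\frac{\mu_2}{\sqrt{1-\rho^2}}+\frac{\rho}{\sqrt{1-\rho^2}}\,\frac{y-\mu_1}{\sigma}\Big)}{H(\mu_2)},$$ with the right-hand side interpreted as $0$ when $f_{Z_1}((y-\mu_1)/\sigma)=0$.
   Context: $f_X$ denotes the PDF of a random variable $X$. The distribution of $(Y^*,U^* )^\top$ above is the bivariate symmetric distribution with location $\boldsymbol{\mu}$, scale matrix $\boldsymbol{\Sigma}$ and density generator $g_c$; note $|\boldsymbol{\Sigma}|=\sigma^2(1-\rho^2)$. *)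

theory Defs
  imports "HOL-Probability.Probability"
begin

text \<open>Quadratic form (y-mu)^T Sigma^{-1} (y-mu) for
  Sigma = [[sigma^2, rho*sigma],[rho*sigma, 1]], written out explicitly:
  Sigma^{-1} = 1/(sigma^2(1-rho^2)) [[1, -rho*sigma],[-rho*sigma, sigma^2]].\<close>
definition quadform :: "real \<Rightarrow> real \<Rightarrow> real \<Rightarrow> real \<Rightarrow> real \<Rightarrow> real \<Rightarrow> real" where
  "quadform mu1 mu2 \<sigma> \<rho> y u =
     ((y - mu1)^2 - 2 * \<rho> * \<sigma> * (y - mu1) * (u - mu2) + \<sigma>^2 * (u - mu2)^2)
       / (\<sigma>^2 * (1 - \<rho>^2))"

text \<open>Bivariate symmetric density with generator g, normalising constant K,
  location (mu1,mu2) and scale matrix Sigma; |Sigma| = sigma^2 (1 - rho^2).\<close>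
definition biv_sym_density ::
  "(real \<Rightarrow> real) \<Rightarrow> real \<Rightarrow> real \<Rightarrow> real \<Rightarrow> real \<Rightarrow> real \<Rightarrow> real \<Rightarrow> real \<Rightarrow> real" where
  "biv_sym_density g K mu1 mu2 \<sigma> \<rho> y u =
     1 / (sqrt (\<sigma>^2 * (1 - \<rho>^2)) * pi * K) * g (quadform mu1 mu2 \<sigma> \<rho> y u)"

definition Hfun :: "(real \<Rightarrow> real) \<Rightarrow> real \<Rightarrow> real" where
  "Hfun fS x = (LINT u:{-x<..}|lborel. fS u)"

definition Gfun :: "(real \<Rightarrow> real \<Rightarrow> real) \<Rightarrow> (real \<Rightarrow> real) \<Rightarrow> real \<Rightarrow> real \<Rightarrow> real" where
  "Gfun fZ12 fZ1 c x = (LINT w:{..x}|lborel. fZ12 c w / fZ1 c)"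

end

theory Submission
  imports Defs
begin

lemma subst_sin:
  fixes \<psi> :: "real \<Rightarrow> ennreal" assumes [measurable]: "\<psi> \<in> borel_measurable borel"
  shows "(\<integral>\<^sup>+d. ennreal (indicator {0<..<1} d * (2/(pi * sqrt(1-d^2)))) * \<psi> d \<partial>lborel)
       = (\<integral>\<^sup>+\<theta>. ennreal (2/pi) * \<psi> (sin \<theta>) * indicator {0<..<pi/2} \<theta> \<partial>lborel)"
proof -
  let ?f = "\<lambda>d. ennreal (indicator {0<..<1} d * (2/(pi * sqrt(1-d^2)))) * \<psi> d"
  have "(\<integral>\<^sup>+d. ?f d * indicator {sin 0..sin (pi/2)} d \<partial>lborel) =
        (\<integral>\<^sup>+\<theta>. ?f (sin \<theta>) * cos \<theta> * indicator {0..pi/2} \<theta> \<partial>lborel)"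
    by (rule nn_integral_substitution_aux)
       (auto intro!: derivative_eq_intros continuous_intros simp: cos_ge_zero)
  also have "(\<integral>\<^sup>+d. ?f d * indicator {sin 0..sin (pi/2)} d \<partial>lborel) = (\<integral>\<^sup>+d. ?f d \<partial>lborel)"
    by (intro nn_integral_cong) (auto split: split_indicator)
  also have "(\<integral>\<^sup>+\<theta>. ?f (sin \<theta>) * cos \<theta> * indicator {0..pi/2} \<theta> \<partial>lborel) =
     (\<integral>\<^sup>+\<theta>. ennreal (2/pi) * \<psi> (sin \<theta>) * indicator {0<..<pi/2} \<theta> \<partial>lborel)"
  proof (intro nn_integral_cong)
    fix \<theta> :: real
    show "?f (sin \<theta>) * cos \<theta> * indicator {0..pi/2} \<theta> = ennreal (2/pi) * \<psi> (sin \<theta>) * indicator {0<..<pi/2} \<theta>"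
    proof (cases "0 < \<theta> \<and> \<theta> < pi/2")
      case True
      then have s: "0 < sin \<theta>" "sin \<theta> < 1" "0 < cos \<theta>"
      proof -
        have a: "0 < sin \<theta>" using True by (intro sin_gt_zero) auto
        have b: "0 < cos \<theta>" using True by (intro cos_gt_zero) auto
        have "sin \<theta> \<noteq> 1" proof
          assume "sin \<theta> = 1" then have "(cos \<theta>)^2 = 0" using sin_cos_squared_add[of \<theta>] by simp
          with b show False by simp
        qed
        with sin_le_one[of \<theta>] have "sin \<theta> < 1" by linarith
        with a b show "0 < sin \<theta>" "sin \<theta> < 1" "0 < cos \<theta>" by auto
      qed
      have "sqrt (1 - (sin \<theta>)^2) = cos \<theta>"
        using s by (simp add: cos_squared_eq[symmetric])
      moreover have e: "ennreal (cos \<theta>) * ennreal (2/(pi * cos \<theta>)) = ennreal (2/pi)"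
        using s by (simp add: ennreal_mult[symmetric])
      ultimately show ?thesis using True s
        by (simp add: ac_simps) (metis e mult.assoc mult.commute)
    next
      case False
      then have "\<theta> \<le> 0 \<or> \<theta> \<ge> pi/2" by auto
      then show ?thesis
      proof
        assume "\<theta> \<le> 0" then show ?thesis
          by (cases "\<theta> = 0") (auto split: split_indicator)
      next
        assume "\<theta> \<ge> pi/2" then show ?thesis
        proof (cases "\<theta> = pi/2")
          case True then have "sin \<theta> = 1" by (simp only: True sin_pi_half)
          then have "indicator {0<..<1} (sin \<theta>) = (0::real)" by simp
          moreover have "indicator {0<..<pi/2} \<theta> = (0::ennreal)" using True by simp
          ultimately show ?thesis by simp
        qed (auto split: split_indicator)
      qed
    qed
  qed
  finally show ?thesis .
qed

lemma SUP_indicator_mult: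
  fixes F :: "'a \<Rightarrow> ennreal"
  assumes "incseq A"
  shows "(SUP n. F x * indicator (A n) x) = F x * indicator (\<Union>n. A n) x"
proof (cases "x \<in> (\<Union>n. A n)")
  case True
  then obtain m where m: "x \<in> A m" by auto
  have "(SUP n. F x * indicator (A n) x) = F x"
  proof (rule antisym)
    show "(SUP n. F x * indicator (A n) x) \<le> F x"
      by (intro SUP_least) (auto split: split_indicator)
    have "F x = F x * indicator (A m) x" using m by simp
    also have "\<dots> \<le> (SUP n. F x * indicator (A n) x)" by (rule SUP_upper) auto
    finally show "F x \<le> (SUP n. F x * indicator (A n) x)" .
  qed
  then show ?thesis using True by simp
next
  case False then show ?thesis by auto
qed

lemma nn_integral_incseq_indicator:
  fixes F :: "real \<Rightarrow> ennreal"
  assumes [measurable]: "F \<in> borel_measurable borel" "\<And>n. A n \<in> sets borel" and inc: "incseq A"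
  shows "(\<integral>\<^sup>+x. F x * indicator (\<Union>n. A n) x \<partial>lborel) = (SUP n. \<integral>\<^sup>+x. F x * indicator (A n) x \<partial>lborel)"
proof -
  have "(\<integral>\<^sup>+x. F x * indicator (\<Union>n. A n) x \<partial>lborel) = (\<integral>\<^sup>+x. (SUP n. F x * indicator (A n) x) \<partial>lborel)"
    using SUP_indicator_mult[OF inc] by simp
  also have "\<dots> = (SUP n. \<integral>\<^sup>+x. F x * indicator (A n) x \<partial>lborel)"
  proof (rule nn_integral_monotone_convergence_SUP)
    show "incseq (\<lambda>n x. F x * indicator (A n) x)"
      using inc by (auto simp: incseq_def le_fun_def intro!: mult_left_mono split: split_indicator)
  qed measurable
  finally show ?thesis .
qed

lemma nn_subst_ray:
  fixes f :: "real \<Rightarrow> ennreal" and g g' :: "real \<Rightarrow> real"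
  assumes Mf[measurable]: "f \<in> borel_measurable borel"
    and derivg: "\<And>x. x \<ge> a \<Longrightarrow> (g has_real_derivative g' x) (at x)"
    and contg': "continuous_on {a..} g'"
    and nonneg: "\<And>x. x \<ge> a \<Longrightarrow> g' x \<ge> 0"
  shows "(\<integral>\<^sup>+x. f x * indicator (\<Union>n::nat. {g a..g (a + 1 + real n)}) x \<partial>lborel)
       = (\<integral>\<^sup>+x. f (g x) * ennreal (g' x) * indicator {a..} x \<partial>lborel)"
proof -
  have mono: "g x \<le> g y" if "a \<le> x" "x \<le> y" for x y
    by (rule deriv_nonneg_imp_mono[of x y g g']) (use that derivg nonneg in auto)
  have contg: "continuous_on {a..} g"
    by (rule DERIV_continuous_on) (use derivg in \<open>auto intro: has_field_derivative_at_within\<close>)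
  have Mg[measurable]: "(\<lambda>x. f (g x) * ennreal (g' x) * indicator {a..} x) \<in> borel_measurable borel"
  proof -
    have c1: "continuous_on UNIV (\<lambda>x. g (max a x))"
      by (rule continuous_on_compose2[OF contg]) (auto intro!: continuous_intros)
    have c2: "continuous_on UNIV (\<lambda>x. g' (max a x))"
      by (rule continuous_on_compose2[OF contg']) (auto intro!: continuous_intros)
    have [measurable]: "(\<lambda>x. g (max a x)) \<in> borel_measurable borel" "(\<lambda>x. g' (max a x)) \<in> borel_measurable borel"
      using c1 c2 by (auto intro: borel_measurable_continuous_onI)
    have "(\<lambda>x. f (g (max a x)) * ennreal (g' (max a x)) * indicator {a..} x) \<in> borel_measurable borel"
      by measurable
    also have "(\<lambda>x. f (g (max a x)) * ennreal (g' (max a x)) * indicator {a..} x) = (\<lambda>x. f (g x) * ennreal (g' x) * indicator {a..} x)"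
      by (auto simp: fun_eq_iff max_def split: split_indicator)
    finally show ?thesis .
  qed
  have inc1: "incseq (\<lambda>n::nat. {g a..g (a + 1 + real n)})"
    by (auto simp: incseq_def intro!: mono)
  have inc2: "incseq (\<lambda>n::nat. {a..a + 1 + real n})"
    by (auto simp: incseq_def)
  have U2: "(\<Union>n::nat. {a..a + 1 + real n}) = {a..}"
  proof (intro equalityI subsetI)
    fix x assume "x \<in> {a..}"
    obtain n :: nat where "x - a \<le> real n" using real_arch_simple by blast
    then show "x \<in> (\<Union>n::nat. {a..a + 1 + real n})" using \<open>x \<in> {a..}\<close> by (intro UN_I[of n]) auto
  qed auto
  have step: "(\<integral>\<^sup>+x. f x * indicator {g a..g (a + 1 + real n)} x \<partial>lborel)
       = (\<integral>\<^sup>+x. f (g x) * ennreal (g' x) * indicator {a..a + 1 + real n} x \<partial>lborel)" for n :: nat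
    by (rule nn_integral_substitution_aux) (use derivg nonneg in \<open>auto intro: continuous_on_subset[OF contg']\<close>)
  have "(\<integral>\<^sup>+x. f x * indicator (\<Union>n::nat. {g a..g (a + 1 + real n)}) x \<partial>lborel)
      = (SUP n. \<integral>\<^sup>+x. f x * indicator {g a..g (a + 1 + real n)} x \<partial>lborel)"
    by (rule nn_integral_incseq_indicator[OF Mf _ inc1]) simp
  also have "\<dots> = (SUP n. \<integral>\<^sup>+x. f (g x) * ennreal (g' x) * indicator {a..a + 1 + real n} x \<partial>lborel)"
    using step by simp
  also have "\<dots> = (SUP n. \<integral>\<^sup>+x. (f (g x) * ennreal (g' x) * indicator {a..} x) * indicator {a..a + 1 + real n} x \<partial>lborel)"
    by (intro SUP_cong nn_integral_cong refl) (auto split: split_indicator)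
  also have "\<dots> = (\<integral>\<^sup>+x. (f (g x) * ennreal (g' x) * indicator {a..} x) * indicator (\<Union>n::nat. {a..a + 1 + real n}) x \<partial>lborel)"
    by (rule nn_integral_incseq_indicator[OF Mg _ inc2, symmetric]) simp
  also have "\<dots> = (\<integral>\<^sup>+x. f (g x) * ennreal (g' x) * indicator {a..} x \<partial>lborel)"
    unfolding U2 by (intro nn_integral_cong) (auto split: split_indicator)
  finally show ?thesis .
qed

lemma nn_integral_split_sign:
  fixes h :: "real \<Rightarrow> ennreal" assumes [measurable]: "h \<in> borel_measurable borel"
  shows "(\<integral>\<^sup>+x. h x \<partial>lborel) = (\<integral>\<^sup>+x. (h x + h (-x)) * indicator {0<..} x \<partial>lborel)"
proof -
  have "(\<integral>\<^sup>+x. h x \<partial>lborel) = (\<integral>\<^sup>+x. h x * indicator {0<..} x + h x * indicator {..<0} x \<partial>lborel)"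
    using AE_lborel_singleton[of 0] by (intro nn_integral_cong_AE) (auto split: split_indicator)
  also have "\<dots> = (\<integral>\<^sup>+x. h x * indicator {0<..} x \<partial>lborel) + (\<integral>\<^sup>+x. h x * indicator {..<0} x \<partial>lborel)"
    by (rule nn_integral_add) auto
  also have "(\<integral>\<^sup>+x. h x * indicator {..<0} x \<partial>lborel) = (\<integral>\<^sup>+x. h (-x) * indicator {0<..} x \<partial>lborel)"
    using nn_integral_real_affine[of "\<lambda>x. h x * indicator {..<0} x" "-1" 0]
    by (auto simp: indicator_def)
  also have "(\<integral>\<^sup>+x. h x * indicator {0<..} x \<partial>lborel) + (\<integral>\<^sup>+x. h (-x) * indicator {0<..} x \<partial>lborel)
     = (\<integral>\<^sup>+x. (h x + h (-x)) * indicator {0<..} x \<partial>lborel)"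
    by (subst nn_integral_add[symmetric]) (auto simp: distrib_right)
  finally show ?thesis .
qed

lemma test_meas:
  fixes g0 :: "real \<Rightarrow> real" and \<Phi> :: "real \<times> real \<Rightarrow> ennreal"
  assumes [measurable]: "g0 \<in> borel_measurable borel" "\<Phi> \<in> borel_measurable (lborel \<Otimes>\<^sub>M lborel)"
  shows "(\<lambda>(r, \<theta>). ennreal (indicator {0<..} r * (2 * r * g0 (r^2) / K) * (2/pi)) * \<Phi> (r * sin \<theta>, r * cos \<theta>) * indicator {0<..<pi/2} \<theta>) \<in> borel_measurable (lborel \<Otimes>\<^sub>M lborel)"
  by measurable

lemma polar_quadrant:
  fixes g0 :: "real \<Rightarrow> real" and \<Phi> :: "real \<times> real \<Rightarrow> ennreal" and K :: real
  assumes [measurable]: "g0 \<in> borel_measurable borel" and g0nn: "\<And>u. g0 u \<ge> 0"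
    and [measurable]: "\<Phi> \<in> borel_measurable (lborel \<Otimes>\<^sub>M lborel)" and K: "K > 0"
  shows "(\<integral>\<^sup>+r. \<integral>\<^sup>+d. ennreal (indicator {0<..} r * (2 * r * g0 (r^2) / K)) * ennreal (indicator {0<..<1} d * (2 / (pi * sqrt (1 - d^2)))) * \<Phi> (r * d, r * sqrt (1 - d^2)) \<partial>lborel \<partial>lborel)
   = (\<integral>\<^sup>+x. \<integral>\<^sup>+y. ennreal (4 / (pi * K) * g0 (x^2 + y^2)) * \<Phi> (x, y) * indicator {0<..} x * indicator {0<..} y \<partial>lborel \<partial>lborel)"
proof -
  define F1 where "F1 r \<theta> = ennreal (indicator {0<..} r * (2 * r * g0 (r^2) / K) * (2/pi)) * \<Phi> (r * sin \<theta>, r * cos \<theta>) * indicator {0<..<pi/2} \<theta>" for r \<theta>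
  define F2 where "F2 y \<theta> = ennreal (4 / (pi * K) * indicator {0<..} y * (y / (cos \<theta>)^2) * g0 (y^2 / (cos \<theta>)^2)) * \<Phi> (y * (sin \<theta> / cos \<theta>), y) * indicator {0<..<pi/2} \<theta>" for y \<theta>
  define G where "G x y = ennreal (4 / (pi * K) * g0 (x^2 + y^2)) * \<Phi> (x, y) * indicator {0<..} x * indicator {0<..} y" for x y
  have [measurable]: "case_prod F1 \<in> borel_measurable (lborel \<Otimes>\<^sub>M lborel)"
    unfolding F1_def by measurable
  have [measurable]: "case_prod F2 \<in> borel_measurable (lborel \<Otimes>\<^sub>M lborel)"
    unfolding F2_def by measurable
  have [measurable]: "case_prod G \<in> borel_measurable (lborel \<Otimes>\<^sub>M lborel)"
    unfolding G_def by measurable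
  have s1: "(\<integral>\<^sup>+d. ennreal (indicator {0<..} r * (2 * r * g0 (r^2) / K)) * ennreal (indicator {0<..<1} d * (2 / (pi * sqrt (1 - d^2)))) * \<Phi> (r * d, r * sqrt (1 - d^2)) \<partial>lborel)
     = (\<integral>\<^sup>+\<theta>. F1 r \<theta> \<partial>lborel)" for r
  proof -
    have "(\<integral>\<^sup>+d. ennreal (indicator {0<..} r * (2 * r * g0 (r^2) / K)) * ennreal (indicator {0<..<1} d * (2 / (pi * sqrt (1 - d^2)))) * \<Phi> (r * d, r * sqrt (1 - d^2)) \<partial>lborel)
      = (\<integral>\<^sup>+d. ennreal (indicator {0<..<1} d * (2 / (pi * sqrt (1 - d^2)))) * (ennreal (indicator {0<..} r * (2 * r * g0 (r^2) / K)) * \<Phi> (r * d, r * sqrt (1 - d^2))) \<partial>lborel)"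
      by (intro nn_integral_cong) (simp add: ac_simps)
    also have "\<dots> = (\<integral>\<^sup>+\<theta>. ennreal (2/pi) * (ennreal (indicator {0<..} r * (2 * r * g0 (r^2) / K)) * \<Phi> (r * sin \<theta>, r * sqrt (1 - (sin \<theta>)^2))) * indicator {0<..<pi/2} \<theta> \<partial>lborel)"
      by (rule subst_sin) measurable
    also have "\<dots> = (\<integral>\<^sup>+\<theta>. F1 r \<theta> \<partial>lborel)"
    proof (intro nn_integral_cong)
      fix \<theta> :: real
      show "ennreal (2/pi) * (ennreal (indicator {0<..} r * (2 * r * g0 (r^2) / K)) * \<Phi> (r * sin \<theta>, r * sqrt (1 - (sin \<theta>)^2))) * indicator {0<..<pi/2} \<theta> = F1 r \<theta>"
      proof (cases "0 < \<theta> \<and> \<theta> < pi/2")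
        case True
        then have c: "0 < cos \<theta>" by (intro cos_gt_zero) auto
        then have sq: "sqrt (1 - (sin \<theta>)^2) = cos \<theta>" by (simp add: cos_squared_eq[symmetric])
        have e: "ennreal (2/pi) * ennreal (indicator {0<..} r * (2 * r * g0 (r^2) / K)) = ennreal (indicator {0<..} r * (2 * r * g0 (r^2) / K) * (2/pi))"
          using K g0nn by (subst ennreal_mult[symmetric]) (auto simp: ac_simps split: split_indicator)
        show ?thesis unfolding F1_def e[symmetric] by (simp only: sq mult.assoc)
      next
        case False then show ?thesis unfolding F1_def by simp
      qed
    qed
    finally show ?thesis .
  qed
  have s3: "(\<integral>\<^sup>+r. F1 r \<theta> \<partial>lborel) = (\<integral>\<^sup>+y. F2 y \<theta> \<partial>lborel)" for \<theta>
  proof (cases "0 < \<theta> \<and> \<theta> < pi/2")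
    case False then show ?thesis unfolding F1_def F2_def by simp
  next
    case True
    define c where "c = cos \<theta>"
    have c: "0 < c" unfolding c_def using True by (intro cos_gt_zero) auto
    have [measurable]: "(\<lambda>r. F1 r \<theta>) \<in> borel_measurable borel" unfolding F1_def by measurable
    have "(\<integral>\<^sup>+r. F1 r \<theta> \<partial>lborel) = ennreal \<bar>1/c\<bar> * (\<integral>\<^sup>+y. F1 (0 + 1/c * y) \<theta> \<partial>lborel)"
      using c by (intro nn_integral_real_affine) auto
    also have "\<dots> = (\<integral>\<^sup>+y. ennreal (1/c) * F1 (y / c) \<theta> \<partial>lborel)"
      using c by (subst nn_integral_cmult) auto
    also have "\<dots> = (\<integral>\<^sup>+y. F2 y \<theta> \<partial>lborel)"
    proof (intro nn_integral_cong)
      fix y :: real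
      have ne: "0 \<le> indicator {0<..} (y/c) * (2 * (y/c) * g0 ((y/c)^2) / K) * (2/pi)"
        using c K g0nn[of "(y/c)^2"] by (cases "y > 0") (auto split: split_indicator simp: zero_less_divide_iff)
      have eq: "1/c * (indicator {0<..} (y/c) * (2 * (y/c) * g0 ((y/c)^2) / K) * (2/pi))
         = 4 / (pi * K) * indicator {0<..} y * (y / c^2) * g0 (y^2 / c^2)"
        using c K by (auto simp: field_simps power2_eq_square split: split_indicator)
      have p: "y / c * sin \<theta> = y * (sin \<theta> / cos \<theta>)" "y / c * cos \<theta> = y"
        using c unfolding c_def by auto
      show "ennreal (1/c) * F1 (y / c) \<theta> = F2 y \<theta>"
        unfolding F1_def F2_def c_def[symmetric] p mult.assoc[symmetric]
        using c ne eq by (simp add: ennreal_mult[symmetric])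
    qed
    finally show ?thesis .
  qed
  have s5: "(\<integral>\<^sup>+\<theta>. F2 y \<theta> \<partial>lborel) = (\<integral>\<^sup>+x. G x y \<partial>lborel)" for y
  proof (cases "y > 0")
    case False then show ?thesis unfolding F2_def G_def by simp
  next
    case True
    have [measurable]: "(\<lambda>\<theta>. F2 y \<theta>) \<in> borel_measurable borel" unfolding F2_def by measurable
    have "(\<integral>\<^sup>+\<theta>. F2 y \<theta> * indicator (\<Union>n::nat. {arctan (0/y)..arctan ((0 + 1 + real n)/y)}) \<theta> \<partial>lborel)
        = (\<integral>\<^sup>+x. F2 y (arctan (x/y)) * ennreal (y / (x^2 + y^2)) * indicator {0..} x \<partial>lborel)"
    proof (rule nn_subst_ray)
      fix x :: real
      show "((\<lambda>x. arctan (x/y)) has_real_derivative y / (x^2 + y^2)) (at x)"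
        using True by (auto intro!: derivative_eq_intros simp: field_simps power2_eq_square)
      show "0 \<le> y / (x^2 + y^2)" using True by auto
    next
      show "continuous_on {0..} (\<lambda>x. y / (x^2 + y^2))"
        using True by (intro continuous_intros) (auto simp: add_nonneg_pos)
    qed measurable
    also have "(\<integral>\<^sup>+\<theta>. F2 y \<theta> * indicator (\<Union>n::nat. {arctan (0/y)..arctan ((0 + 1 + real n)/y)}) \<theta> \<partial>lborel)
        = (\<integral>\<^sup>+\<theta>. F2 y \<theta> \<partial>lborel)"
    proof (intro nn_integral_cong)
      fix \<theta> :: real
      show "F2 y \<theta> * indicator (\<Union>n::nat. {arctan (0/y)..arctan ((0 + 1 + real n)/y)}) \<theta> = F2 y \<theta>"
      proof (cases "0 < \<theta> \<and> \<theta> < pi/2")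
        case False then show ?thesis unfolding F2_def by simp
      next
        case T: True
        obtain n :: nat where n: "y * tan \<theta> \<le> real n" using real_arch_simple by blast
        have "\<theta> = arctan (tan \<theta>)" using T by (simp add: arctan_tan)
        also have "\<dots> \<le> arctan ((0 + 1 + real n)/y)"
          using n True by (subst arctan_le_iff) (auto simp: field_simps)
        finally have "\<theta> \<in> (\<Union>n::nat. {arctan (0/y)..arctan ((0 + 1 + real n)/y)})"
          using T by (intro UN_I[of n]) auto
        then show ?thesis by simp
      qed
    qed
    also have "(\<integral>\<^sup>+x. F2 y (arctan (x/y)) * ennreal (y / (x^2 + y^2)) * indicator {0..} x \<partial>lborel)
       = (\<integral>\<^sup>+x. G x y \<partial>lborel)"
    proof (intro nn_integral_cong)
      fix x :: real
      show "F2 y (arctan (x/y)) * ennreal (y / (x^2 + y^2)) * indicator {0..} x = G x y"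
      proof (cases "x > 0")
        case False then show ?thesis unfolding F2_def G_def by (cases "x = 0") auto
      next
        case xp: True
        define u where "u = x / y"
        have u: "0 < u" unfolding u_def using xp True by auto
        have at: "0 < arctan u" "arctan u < pi/2" using u arctan_ubound[of u] by auto
        have cs: "(cos (arctan u))^2 = 1 / (1 + u^2)"
          by (simp add: cos_arctan power_divide add_pos_nonneg)
        have tn: "sin (arctan u) / cos (arctan u) = u"
          using tan_arctan[of u] by (simp add: tan_def)
        have e1: "y / (cos (arctan u))^2 = (x^2 + y^2) / y" "y^2 / (cos (arctan u))^2 = x^2 + y^2" "y * u = x"
          unfolding cs using True by (auto simp: u_def field_simps power2_eq_square)
        have e2: "ennreal (4 / (pi * K) * 1 * ((x^2 + y^2) / y) * g0 (x^2 + y^2)) * ennreal (y / (x^2 + y^2))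
           = ennreal (4 / (pi * K) * g0 (x^2 + y^2))"
        proof -
          have q: "x^2 + y^2 > 0" using True xp by (intro add_pos_pos) auto
          have r: "4 / (pi * K) * 1 * ((x^2 + y^2) / y) * g0 (x^2 + y^2) * (y / (x^2 + y^2)) = 4 / (pi * K) * g0 (x^2 + y^2)"
          proof -
            have one: "((x^2 + y^2) / y) * (y / (x^2 + y^2)) = 1" using q True by simp
            show ?thesis using one by algebra
          qed
          have n1: "0 \<le> 4 / (pi * K) * 1 * ((x^2 + y^2) / y) * g0 (x^2 + y^2)"
            using q True K g0nn[of "x^2+y^2"] by (intro mult_nonneg_nonneg divide_nonneg_nonneg) auto
          have n2: "0 \<le> y / (x^2 + y^2)" using q True by auto
          show ?thesis using ennreal_mult[OF n1 n2, symmetric] r by simp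
        qed
        have e3: "y * (sin (arctan u) / cos (arctan u)) = x" using tn e1(3) by simp
        show ?thesis unfolding F2_def G_def u_def[symmetric] e1 e3 using at xp True e2
          by (simp add: ac_simps)
      qed
    qed
    finally show ?thesis by simp
  qed
  have "(\<integral>\<^sup>+r. \<integral>\<^sup>+d. ennreal (indicator {0<..} r * (2 * r * g0 (r^2) / K)) * ennreal (indicator {0<..<1} d * (2 / (pi * sqrt (1 - d^2)))) * \<Phi> (r * d, r * sqrt (1 - d^2)) \<partial>lborel \<partial>lborel)
      = (\<integral>\<^sup>+r. \<integral>\<^sup>+\<theta>. F1 r \<theta> \<partial>lborel \<partial>lborel)" by (simp only: s1)
  also have "\<dots> = (\<integral>\<^sup>+\<theta>. \<integral>\<^sup>+r. F1 r \<theta> \<partial>lborel \<partial>lborel)"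
    by (rule lborel_pair.Fubini'[symmetric]) measurable
  also have "\<dots> = (\<integral>\<^sup>+\<theta>. \<integral>\<^sup>+y. F2 y \<theta> \<partial>lborel \<partial>lborel)" by (simp only: s3)
  also have "\<dots> = (\<integral>\<^sup>+y. \<integral>\<^sup>+\<theta>. F2 y \<theta> \<partial>lborel \<partial>lborel)"
    by (rule lborel_pair.Fubini') measurable
  also have "\<dots> = (\<integral>\<^sup>+y. \<integral>\<^sup>+x. G x y \<partial>lborel \<partial>lborel)" by (simp only: s5)
  also have "\<dots> = (\<integral>\<^sup>+x. \<integral>\<^sup>+y. G x y \<partial>lborel \<partial>lborel)"
    by (rule lborel_pair.Fubini') measurable
  finally show ?thesis unfolding G_def .
qed

context prob_space begin

lemma indep_extract:
  fixes A B C E :: "'a \<Rightarrow> real"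
  assumes ind: "indep_vars (\<lambda>_. borel) (\<lambda>i. [A, B, C, E] ! i) {..<4}"
  shows "indep_var (lborel \<Otimes>\<^sub>M lborel) (\<lambda>\<omega>. (A \<omega>, B \<omega>)) (lborel \<Otimes>\<^sub>M lborel) (\<lambda>\<omega>. (C \<omega>, E \<omega>))"
    and "indep_var lborel A lborel B" and "indep_var lborel C lborel E"
proof -
  let ?X = "\<lambda>i. [A, B, C, E] ! i"
  have m1: "(\<lambda>x. (x i, x j)) \<in> measurable (PiM {i, j} (\<lambda>_. borel)) (lborel \<Otimes>\<^sub>M lborel)" for i j :: nat
    by measurable
  have m2: "(\<lambda>x. x i) \<in> measurable (PiM {i} (\<lambda>_. borel)) lborel" for i :: nat
    by measurable
  have "indep_var (PiM {0,1} (\<lambda>_. borel)) (\<lambda>\<omega>. restrict (\<lambda>i. ?X i \<omega>) {0,1}) (PiM {2,3} (\<lambda>_. borel)) (\<lambda>\<omega>. restrict (\<lambda>i. ?X i \<omega>) {2,3})"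
    by (rule indep_var_restrict[OF ind]) auto
  from indep_var_compose[OF this m1 m1]
  show "indep_var (lborel \<Otimes>\<^sub>M lborel) (\<lambda>\<omega>. (A \<omega>, B \<omega>)) (lborel \<Otimes>\<^sub>M lborel) (\<lambda>\<omega>. (C \<omega>, E \<omega>))"
    by (simp add: comp_def)
  have "indep_var (PiM {0} (\<lambda>_. borel)) (\<lambda>\<omega>. restrict (\<lambda>i. ?X i \<omega>) {0}) (PiM {1} (\<lambda>_. borel)) (\<lambda>\<omega>. restrict (\<lambda>i. ?X i \<omega>) {1})"
    by (rule indep_var_restrict[OF ind]) auto
  from indep_var_compose[OF this m2 m2]
  show "indep_var lborel A lborel B"
    by (simp add: comp_def)
  have "indep_var (PiM {2} (\<lambda>_. borel)) (\<lambda>\<omega>. restrict (\<lambda>i. ?X i \<omega>) {2}) (PiM {3} (\<lambda>_. borel)) (\<lambda>\<omega>. restrict (\<lambda>i. ?X i \<omega>) {3})"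
    by (rule indep_var_restrict[OF ind]) auto
  from indep_var_compose[OF this m2 m2]
  show "indep_var lborel C lborel E"
    by (simp add: comp_def)
qed

end

context prob_space begin

lemma sign_AE:
  fixes V :: "'a \<Rightarrow> real"
  assumes [measurable]: "V \<in> borel_measurable M"
    and p1: "measure M {\<omega> \<in> space M. V \<omega> = -1} = 1/2" and p2: "measure M {\<omega> \<in> space M. V \<omega> = 1} = 1/2"
  shows "AE \<omega> in M. V \<omega> = -1 \<or> V \<omega> = 1"
proof -
  have "prob ({\<omega> \<in> space M. V \<omega> = -1} \<union> {\<omega> \<in> space M. V \<omega> = 1}) = prob {\<omega> \<in> space M. V \<omega> = -1} + prob {\<omega> \<in> space M. V \<omega> = 1}"
    by (rule finite_measure_Union) auto
  moreover have "{\<omega> \<in> space M. V \<omega> = -1} \<union> {\<omega> \<in> space M. V \<omega> = 1} = {\<omega> \<in> space M. V \<omega> = -1 \<or> V \<omega> = 1}" by auto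
  ultimately have "prob {\<omega> \<in> space M. V \<omega> = -1 \<or> V \<omega> = 1} = 1"
    using p1 p2 by simp
  then show ?thesis
    by (rule AE_prob_1[THEN AE_mp]) auto
qed

lemma two_signs_integral:
  fixes V1 V2 :: "'a \<Rightarrow> real" and J :: "real \<times> real \<Rightarrow> ennreal"
  assumes ind: "indep_var lborel V1 lborel V2"
    and p1: "measure M {\<omega> \<in> space M. V1 \<omega> = -1} = 1/2" "measure M {\<omega> \<in> space M. V1 \<omega> = 1} = 1/2"
    and p2: "measure M {\<omega> \<in> space M. V2 \<omega> = -1} = 1/2" "measure M {\<omega> \<in> space M. V2 \<omega> = 1} = 1/2"
  shows "(\<integral>\<^sup>+\<omega>. J (V1 \<omega>, V2 \<omega>) \<partial>M) = (J (-1,-1) + J (-1,1) + J (1,-1) + J (1,1)) / 4"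
proof -
  have [measurable]: "V1 \<in> borel_measurable M" "V2 \<in> borel_measurable M"
    using indep_var_rv1[OF ind] indep_var_rv2[OF ind] by auto
  define S where "S a b = {\<omega> \<in> space M. V1 \<omega> = a \<and> V2 \<omega> = b}" for a b
  have S[measurable]: "S a b \<in> sets M" for a b unfolding S_def by measurable
  have pS: "emeasure M (S a b) = 1/4" if "a \<in> {-1,1}" "b \<in> {-1,1}" for a b
  proof -
    have "prob ((\<lambda>x. (V1 x, V2 x)) -` ({a} \<times> {b}) \<inter> space M) = prob (V1 -` {a} \<inter> space M) * prob (V2 -` {b} \<inter> space M)"
      by (rule indep_varD[OF ind]) auto
    moreover have "(\<lambda>x. (V1 x, V2 x)) -` ({a} \<times> {b}) \<inter> space M = S a b" unfolding S_def by auto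
    moreover have "V1 -` {a} \<inter> space M = {\<omega> \<in> space M. V1 \<omega> = a}" "V2 -` {b} \<inter> space M = {\<omega> \<in> space M. V2 \<omega> = b}" by auto
    moreover have "prob {\<omega> \<in> space M. V1 \<omega> = a} = 1/2" using that p1 by auto
    moreover have "prob {\<omega> \<in> space M. V2 \<omega> = b} = 1/2" using that p2 by auto
    ultimately have pp: "prob (S a b) = 1/4" by simp
    have "emeasure M (S a b) = ennreal (prob (S a b))" by (simp add: emeasure_eq_measure)
    also have "\<dots> = ennreal (1/4)" by (simp only: pp)
    also have "\<dots> = 1/4" using ennreal_divide_numeral[of 1 "num.Bit0 (num.Bit0 num.One)"] by simp
    finally show ?thesis .
  qed
  have AE: "AE \<omega> in M. J (V1 \<omega>, V2 \<omega>) = J (-1,-1) * indicator (S (-1) (-1)) \<omega> + J (-1,1) * indicator (S (-1) 1) \<omega> + J (1,-1) * indicator (S 1 (-1)) \<omega> + J (1,1) * indicator (S 1 1) \<omega>"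
  proof -
    have a1: "AE \<omega> in M. V1 \<omega> = -1 \<or> V1 \<omega> = 1" by (rule sign_AE) (use p1 in auto)
    have a2: "AE \<omega> in M. V2 \<omega> = -1 \<or> V2 \<omega> = 1" by (rule sign_AE) (use p2 in auto)
    show ?thesis using a1 a2 AE_space
    proof (eventually_elim)
      case (elim \<omega>) then show ?case by (auto simp: S_def split: split_indicator)
    qed
  qed
  have "(\<integral>\<^sup>+\<omega>. J (V1 \<omega>, V2 \<omega>) \<partial>M) = (\<integral>\<^sup>+\<omega>. J (-1,-1) * indicator (S (-1) (-1)) \<omega> + J (-1,1) * indicator (S (-1) 1) \<omega> + J (1,-1) * indicator (S 1 (-1)) \<omega> + J (1,1) * indicator (S 1 1) \<omega> \<partial>M)"
    by (rule nn_integral_cong_AE[OF AE])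
  also have "\<dots> = J (-1,-1) * emeasure M (S (-1) (-1)) + J (-1,1) * emeasure M (S (-1) 1) + J (1,-1) * emeasure M (S 1 (-1)) + J (1,1) * emeasure M (S 1 1)"
    by (simp add: nn_integral_add nn_integral_cmult_indicator)
  also have "\<dots> = (J (-1,-1) + J (-1,1) + J (1,-1) + J (1,1)) / 4"
    by (simp add: pS divide_ennreal_def distrib_right)
  finally show ?thesis .
qed

end

lemma nn_integral_add4:
  fixes f1 f2 f3 f4 :: "'a \<Rightarrow> ennreal"
  assumes [measurable]: "f1 \<in> borel_measurable M" "f2 \<in> borel_measurable M" "f3 \<in> borel_measurable M" "f4 \<in> borel_measurable M"
  shows "(\<integral>\<^sup>+x. f1 x + f2 x + f3 x + f4 x \<partial>M) = integral\<^sup>N M f1 + integral\<^sup>N M f2 + integral\<^sup>N M f3 + integral\<^sup>N M f4"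
  by (simp add: nn_integral_add)

lemma plane_from_quadrants:
  fixes g0 :: "real \<Rightarrow> real" and \<Phi> :: "real \<times> real \<Rightarrow> ennreal" and K :: real
  assumes [measurable]: "g0 \<in> borel_measurable borel" and g0nn: "\<And>u. g0 u \<ge> 0"
    and [measurable]: "\<Phi> \<in> borel_measurable (lborel \<Otimes>\<^sub>M lborel)" and K: "K > 0"
  defines "J \<equiv> \<lambda>s. \<integral>\<^sup>+x. \<integral>\<^sup>+y. ennreal (4 / (pi * K) * g0 (x^2 + y^2)) * \<Phi> (fst s * x, snd s * y) * indicator {0<..} x * indicator {0<..} y \<partial>lborel \<partial>lborel"
  shows "(J (-1,-1) + J (-1,1) + J (1,-1) + J (1,1)) / 4 = (\<integral>\<^sup>+x. \<integral>\<^sup>+y. ennreal (g0 (x^2 + y^2) / (pi * K)) * \<Phi> (x, y) \<partial>lborel \<partial>lborel)"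
proof -
  define I where "I s = (\<integral>\<^sup>+x. \<integral>\<^sup>+y. ennreal (g0 (x^2 + y^2) / (pi * K)) * \<Phi> (fst s * x, snd s * y) * indicator {0<..} x * indicator {0<..} y \<partial>lborel \<partial>lborel)" for s :: "real \<times> real"
  have JI: "J s = 4 * I s" for s
  proof -
    have e: "ennreal (4 / (pi * K) * g0 (x^2 + y^2)) = 4 * ennreal (g0 (x^2 + y^2) / (pi * K))" for x y
    proof -
      have "4 / (pi * K) * g0 (x^2 + y^2) = 4 * (g0 (x^2 + y^2) / (pi * K))" by simp
      moreover have "ennreal (4 * (g0 (x^2 + y^2) / (pi * K))) = ennreal 4 * ennreal (g0 (x^2 + y^2) / (pi * K))"
        using K g0nn[of "x^2+y^2"] by (intro ennreal_mult) auto
      ultimately show ?thesis by simp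
    qed
    have "J s = (\<integral>\<^sup>+x. \<integral>\<^sup>+y. 4 * (ennreal (g0 (x^2 + y^2) / (pi * K)) * \<Phi> (fst s * x, snd s * y) * indicator {0<..} x * indicator {0<..} y) \<partial>lborel \<partial>lborel)"
      unfolding J_def e by (simp add: mult.assoc)
    also have "\<dots> = (\<integral>\<^sup>+x. 4 * \<integral>\<^sup>+y. (ennreal (g0 (x^2 + y^2) / (pi * K)) * \<Phi> (fst s * x, snd s * y) * indicator {0<..} x * indicator {0<..} y) \<partial>lborel \<partial>lborel)"
      by (intro nn_integral_cong nn_integral_cmult) measurable
    also have "\<dots> = 4 * I s" unfolding I_def
      by (intro nn_integral_cmult) measurable
    finally show ?thesis .
  qed
  define q where "q x y = ennreal (g0 (x^2 + y^2) / (pi * K)) * \<Phi> (x, y)" for x y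
  have [measurable]: "case_prod q \<in> borel_measurable (lborel \<Otimes>\<^sub>M lborel)" unfolding q_def by measurable
  define h where "h x = (\<integral>\<^sup>+y. (q x y + q x (-y)) * indicator {0<..} y \<partial>lborel)" for x
  have [measurable]: "h \<in> borel_measurable borel" unfolding h_def by measurable
  have "(\<integral>\<^sup>+x. \<integral>\<^sup>+y. q x y \<partial>lborel \<partial>lborel) = (\<integral>\<^sup>+x. h x \<partial>lborel)"
    unfolding h_def by (intro nn_integral_cong nn_integral_split_sign) measurable
  also have "\<dots> = (\<integral>\<^sup>+x. (h x + h (-x)) * indicator {0<..} x \<partial>lborel)"
    by (intro nn_integral_split_sign) measurable
  also have "\<dots> = (\<integral>\<^sup>+x. (\<integral>\<^sup>+y. q x y * indicator {0<..} x * indicator {0<..} y \<partial>lborel)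
      + (\<integral>\<^sup>+y. q x (-y) * indicator {0<..} x * indicator {0<..} y \<partial>lborel)
      + (\<integral>\<^sup>+y. q (-x) y * indicator {0<..} x * indicator {0<..} y \<partial>lborel)
      + (\<integral>\<^sup>+y. q (-x) (-y) * indicator {0<..} x * indicator {0<..} y \<partial>lborel) \<partial>lborel)"
  proof (intro nn_integral_cong)
    fix x :: real
    have "(h x + h (-x)) * indicator {0<..} x = (\<integral>\<^sup>+y. (q x y + q x (-y)) * indicator {0<..} y * indicator {0<..} x + (q (-x) y + q (-x) (-y)) * indicator {0<..} y * indicator {0<..} x \<partial>lborel)"
      unfolding h_def by (simp add: nn_integral_add nn_integral_multc distrib_right)
    also have "\<dots> = (\<integral>\<^sup>+y. q x y * indicator {0<..} x * indicator {0<..} y + q x (-y) * indicator {0<..} x * indicator {0<..} y + q (-x) y * indicator {0<..} x * indicator {0<..} y + q (-x) (-y) * indicator {0<..} x * indicator {0<..} y \<partial>lborel)"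
      by (intro nn_integral_cong) (simp only: distrib_left distrib_right mult_ac add_ac)
    also have "\<dots> = (\<integral>\<^sup>+y. q x y * indicator {0<..} x * indicator {0<..} y \<partial>lborel)
      + (\<integral>\<^sup>+y. q x (-y) * indicator {0<..} x * indicator {0<..} y \<partial>lborel)
      + (\<integral>\<^sup>+y. q (-x) y * indicator {0<..} x * indicator {0<..} y \<partial>lborel)
      + (\<integral>\<^sup>+y. q (-x) (-y) * indicator {0<..} x * indicator {0<..} y \<partial>lborel)"
      by (rule nn_integral_add4) measurable
    finally show "(h x + h (-x)) * indicator {0<..} x = (\<integral>\<^sup>+y. q x y * indicator {0<..} x * indicator {0<..} y \<partial>lborel)
      + (\<integral>\<^sup>+y. q x (-y) * indicator {0<..} x * indicator {0<..} y \<partial>lborel)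
      + (\<integral>\<^sup>+y. q (-x) y * indicator {0<..} x * indicator {0<..} y \<partial>lborel)
      + (\<integral>\<^sup>+y. q (-x) (-y) * indicator {0<..} x * indicator {0<..} y \<partial>lborel)" .
  qed
  also have "\<dots> = (\<integral>\<^sup>+x. \<integral>\<^sup>+y. q x y * indicator {0<..} x * indicator {0<..} y \<partial>lborel \<partial>lborel)
      + (\<integral>\<^sup>+x. \<integral>\<^sup>+y. q x (-y) * indicator {0<..} x * indicator {0<..} y \<partial>lborel \<partial>lborel)
      + (\<integral>\<^sup>+x. \<integral>\<^sup>+y. q (-x) y * indicator {0<..} x * indicator {0<..} y \<partial>lborel \<partial>lborel)
      + (\<integral>\<^sup>+x. \<integral>\<^sup>+y. q (-x) (-y) * indicator {0<..} x * indicator {0<..} y \<partial>lborel \<partial>lborel)"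
    by (rule nn_integral_add4) measurable
  also have "\<dots> = I (1,1) + I (1,-1) + I (-1,1) + I (-1,-1)"
    unfolding I_def q_def by simp
  finally have "(\<integral>\<^sup>+x. \<integral>\<^sup>+y. q x y \<partial>lborel \<partial>lborel) = I (1,1) + I (1,-1) + I (-1,1) + I (-1,-1)" .
  moreover have "(J (-1,-1) + J (-1,1) + J (1,-1) + J (1,1)) / 4 = I (1,1) + I (1,-1) + I (-1,1) + I (-1,-1)"
  proof -
    have "J (-1,-1) + J (-1,1) + J (1,-1) + J (1,1) = (I (1,1) + I (1,-1) + I (-1,1) + I (-1,-1)) * 4"
      unfolding JI by (simp add: distrib_right add_ac mult.commute)
    then show ?thesis using mult_divide_eq_ennreal[of 4 "I (1,1) + I (1,-1) + I (-1,1) + I (-1,-1)"] by (simp only:) simp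
  qed
  ultimately show ?thesis unfolding q_def by simp
qed

lemma Z_law:
  fixes M :: "'a measure" and V1 V2 R D :: "'a \<Rightarrow> real" and g0 :: "real \<Rightarrow> real" and K :: real
    and \<Phi> :: "real \<times> real \<Rightarrow> ennreal"
  assumes P: "prob_space M"
    and [measurable]: "g0 \<in> borel_measurable borel" and g0nn: "\<And>u. g0 u \<ge> 0" and K: "K > 0"
    and indep: "prob_space.indep_vars M (\<lambda>_. borel) (\<lambda>i. [V1, V2, R, D] ! i) {..<4}"
    and V1: "measure M {\<omega> \<in> space M. V1 \<omega> = -1} = 1/2" "measure M {\<omega> \<in> space M. V1 \<omega> = 1} = 1/2"
    and V2: "measure M {\<omega> \<in> space M. V2 \<omega> = -1} = 1/2" "measure M {\<omega> \<in> space M. V2 \<omega> = 1} = 1/2"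
    and Ddist: "distributed M lborel D (\<lambda>d. ennreal (indicator {0<..<1} d * (2 / (pi * sqrt (1 - d^2)))))"
    and Rdist: "distributed M lborel R (\<lambda>r. ennreal (indicator {0<..} r * (2 * r * g0 (r^2) / K)))"
    and [measurable]: "\<Phi> \<in> borel_measurable (lborel \<Otimes>\<^sub>M lborel)"
  shows "(\<integral>\<^sup>+\<omega>. \<Phi> (R \<omega> * D \<omega> * V1 \<omega>, R \<omega> * sqrt (1 - (D \<omega>)^2) * V2 \<omega>) \<partial>M)
       = (\<integral>\<^sup>+x. \<integral>\<^sup>+y. ennreal (g0 (x^2 + y^2) / (pi * K)) * \<Phi> (x, y) \<partial>lborel \<partial>lborel)"
proof -
  interpret prob_space M by (rule P)
  note I = indep_extract[OF indep]
  have [measurable]: "V1 \<in> borel_measurable M" "V2 \<in> borel_measurable M" "R \<in> borel_measurable M" "D \<in> borel_measurable M"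
    using indep_var_rv1[OF I(2)] indep_var_rv2[OF I(2)] indep_var_rv1[OF I(3)] indep_var_rv2[OF I(3)] by auto
  define PV where "PV = distr M (lborel \<Otimes>\<^sub>M lborel) (\<lambda>\<omega>. (V1 \<omega>, V2 \<omega>))"
  define PRD where "PRD = distr M (lborel \<Otimes>\<^sub>M lborel) (\<lambda>\<omega>. (R \<omega>, D \<omega>))"
  interpret PV: prob_space PV unfolding PV_def by (rule prob_space_distr) measurable
  interpret PRD: prob_space PRD unfolding PRD_def by (rule prob_space_distr) measurable
  interpret PP: pair_prob_space PV PRD ..
  have joint: "PV \<Otimes>\<^sub>M PRD = distr M ((lborel \<Otimes>\<^sub>M lborel) \<Otimes>\<^sub>M (lborel \<Otimes>\<^sub>M lborel)) (\<lambda>\<omega>. ((V1 \<omega>, V2 \<omega>), (R \<omega>, D \<omega>)))"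
    using I(1) unfolding indep_var_distribution_eq PV_def PRD_def by simp
  define fR where "fR r = ennreal (indicator {0<..} r * (2 * r * g0 (r^2) / K))" for r
  define fD where "fD d = ennreal (indicator {0<..<1} d * (2 / (pi * sqrt (1 - d^2))))" for d
  have [measurable]: "fR \<in> borel_measurable borel" "fD \<in> borel_measurable borel" unfolding fR_def fD_def by measurable
  have PRD_eq: "PRD = density (lborel \<Otimes>\<^sub>M lborel) (\<lambda>(r, d). fR r * fD d)"
  proof -
    have "PRD = distr M lborel R \<Otimes>\<^sub>M distr M lborel D"
      using I(3) unfolding indep_var_distribution_eq PRD_def by simp
    also have "\<dots> = density lborel fR \<Otimes>\<^sub>M density lborel fD"
      using Rdist Ddist unfolding distributed_def fR_def fD_def by simp
    also have "\<dots> = density (lborel \<Otimes>\<^sub>M lborel) (\<lambda>(r, d). fR r * fD d)"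
    proof (rule pair_measure_density)
      have "prob_space (density lborel fD)"
        using Ddist unfolding distributed_def fD_def by (metis prob_space_distr)
      then show "sigma_finite_measure (density lborel fD)"
        by (simp add: prob_space_imp_sigma_finite)
    qed (simp_all add: lborel.sigma_finite_measure_axioms)
    finally show ?thesis .
  qed
  define Jv where "Jv v = (\<integral>\<^sup>+x. \<integral>\<^sup>+y. ennreal (4 / (pi * K) * g0 (x^2 + y^2)) * \<Phi> (fst v * x, snd v * y) * indicator {0<..} x * indicator {0<..} y \<partial>lborel \<partial>lborel)" for v :: "real \<times> real"
  have [measurable]: "Jv \<in> borel_measurable (lborel \<Otimes>\<^sub>M lborel)" unfolding Jv_def by measurable
  define \<Psi> where "\<Psi> p = \<Phi> (fst (fst p) * (fst (snd p) * snd (snd p)), snd (fst p) * (fst (snd p) * sqrt (1 - (snd (snd p))^2)))"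
    for p :: "(real \<times> real) \<times> (real \<times> real)"
  have [measurable]: "\<Psi> \<in> borel_measurable ((lborel \<Otimes>\<^sub>M lborel) \<Otimes>\<^sub>M (lborel \<Otimes>\<^sub>M lborel))" unfolding \<Psi>_def by measurable
  have inner: "(\<integral>\<^sup>+w. \<Psi> (v, w) \<partial>PRD) = Jv v" for v
  proof -
    have [measurable]: "(\<lambda>w. \<Psi> (v, w)) \<in> borel_measurable (lborel \<Otimes>\<^sub>M lborel)" unfolding \<Psi>_def by simp measurable
    have "(\<integral>\<^sup>+w. \<Psi> (v, w) \<partial>PRD) = (\<integral>\<^sup>+w. (case w of (r, d) \<Rightarrow> fR r * fD d) * \<Psi> (v, w) \<partial>(lborel \<Otimes>\<^sub>M lborel))"
      unfolding PRD_eq by (rule nn_integral_density) measurable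
    also have "\<dots> = (\<integral>\<^sup>+r. \<integral>\<^sup>+d. fR r * fD d * \<Phi> (fst v * (r * d), snd v * (r * sqrt (1 - d^2))) \<partial>lborel \<partial>lborel)"
    proof -
      have "(\<integral>\<^sup>+w. (case w of (r, d) \<Rightarrow> fR r * fD d) * \<Psi> (v, w) \<partial>(lborel \<Otimes>\<^sub>M lborel))
        = (\<integral>\<^sup>+r. \<integral>\<^sup>+d. (\<lambda>w. (case w of (r, d) \<Rightarrow> fR r * fD d) * \<Psi> (v, w)) (r, d) \<partial>lborel \<partial>lborel)"
      proof -
        have m: "(\<lambda>w. (case w of (r, d) \<Rightarrow> fR r * fD d) * \<Psi> (v, w)) \<in> borel_measurable (lborel \<Otimes>\<^sub>M lborel)"
          by measurable
        show ?thesis using lborel.nn_integral_fst[OF m] by simp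
      qed
      then show ?thesis by (simp add: \<Psi>_def)
    qed
    also have "\<dots> = Jv v"
    proof -
      have m2: "(\<lambda>p. \<Phi> (fst v * fst p, snd v * snd p)) \<in> borel_measurable (lborel \<Otimes>\<^sub>M lborel)" by measurable
      have g0m: "g0 \<in> borel_measurable borel" by measurable
      show ?thesis unfolding fR_def fD_def Jv_def using polar_quadrant[OF g0m g0nn m2 K] by simp
    qed
    finally show ?thesis .
  qed
  have "(\<integral>\<^sup>+\<omega>. \<Phi> (R \<omega> * D \<omega> * V1 \<omega>, R \<omega> * sqrt (1 - (D \<omega>)^2) * V2 \<omega>) \<partial>M)
      = (\<integral>\<^sup>+\<omega>. \<Psi> ((V1 \<omega>, V2 \<omega>), (R \<omega>, D \<omega>)) \<partial>M)"
    unfolding \<Psi>_def by (simp add: ac_simps)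
  also have "\<dots> = (\<integral>\<^sup>+p. \<Psi> p \<partial>(PV \<Otimes>\<^sub>M PRD))"
    unfolding joint by (subst nn_integral_distr) measurable
  also have "\<dots> = (\<integral>\<^sup>+v. \<integral>\<^sup>+w. \<Psi> (v, w) \<partial>PRD \<partial>PV)"
  proof -
    have "sets (PV \<Otimes>\<^sub>M PRD) = sets ((lborel \<Otimes>\<^sub>M lborel) \<Otimes>\<^sub>M (lborel \<Otimes>\<^sub>M lborel))"
      unfolding PV_def PRD_def by (intro sets_pair_measure_cong) simp_all
    then have m\<Psi>: "\<Psi> \<in> borel_measurable (PV \<Otimes>\<^sub>M PRD)"
      by (subst measurable_cong_sets[OF _ refl]) (assumption, measurable)
    show ?thesis by (rule PRD.nn_integral_fst[OF m\<Psi>, symmetric])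
  qed
  also have "\<dots> = (\<integral>\<^sup>+v. Jv v \<partial>PV)" by (simp add: inner)
  also have "\<dots> = (\<integral>\<^sup>+\<omega>. Jv (V1 \<omega>, V2 \<omega>) \<partial>M)"
    unfolding PV_def by (subst nn_integral_distr) measurable
  also have "\<dots> = (Jv (-1,-1) + Jv (-1,1) + Jv (1,-1) + Jv (1,1)) / 4"
    by (rule two_signs_integral[OF I(2) V1 V2])
  also have "\<dots> = (\<integral>\<^sup>+x. \<integral>\<^sup>+y. ennreal (g0 (x^2 + y^2) / (pi * K)) * \<Phi> (x, y) \<partial>lborel \<partial>lborel)"
    unfolding Jv_def by (rule plane_from_quadrants) (use g0nn K in auto)
  finally show ?thesis .
qed

lemma quadform_nonneg:
  assumes "\<sigma> > 0" "-1 < \<rho>" "\<rho> < 1"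
  shows "quadform mu1 mu2 \<sigma> \<rho> y u \<ge> 0"
proof -
  have "(y - mu1)^2 - 2 * \<rho> * \<sigma> * (y - mu1) * (u - mu2) + \<sigma>^2 * (u - mu2)^2
      = (y - mu1 - \<rho> * \<sigma> * (u - mu2))^2 + \<sigma>^2 * (1 - \<rho>^2) * (u - mu2)^2"
    by algebra
  moreover have "0 \<le> \<sigma>^2 * (1 - \<rho>^2) * (u - mu2)^2"
    using assms by (intro mult_nonneg_nonneg) (auto simp: abs_square_less_1 less_imp_le)
  ultimately have "0 \<le> (y - mu1)^2 - 2 * \<rho> * \<sigma> * (y - mu1) * (u - mu2) + \<sigma>^2 * (u - mu2)^2" by simp
  moreover have "0 < \<sigma>^2 * (1 - \<rho>^2)" using assms by (auto simp: abs_square_less_1)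
  ultimately show ?thesis unfolding quadform_def by simp
qed

lemma quadform_subst:
  assumes "\<sigma> > 0" "-1 < \<rho>" "\<rho> < 1"
  shows "quadform mu1 mu2 \<sigma> \<rho> (mu1 + \<sigma> * x) (mu2 + \<rho> * x + sqrt (1 - \<rho>^2) * z) = x^2 + z^2"
proof -
  have r: "0 < 1 - \<rho>^2" using assms by (auto simp: abs_square_less_1)
  define s where "s = sqrt (1 - \<rho>^2)"
  have s2: "s^2 = 1 - \<rho>^2" unfolding s_def using r by simp
  have "(\<sigma> * x)^2 - 2 * \<rho> * \<sigma> * (\<sigma> * x) * (\<rho> * x + s * z) + \<sigma>^2 * (\<rho> * x + s * z)^2
      = \<sigma>^2 * (1 - \<rho>^2) * (x^2 + z^2)"
    using s2 by algebra
  moreover have "0 < \<sigma>^2 * (1 - \<rho>^2)" using assms r by simp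
  moreover have "quadform mu1 mu2 \<sigma> \<rho> (mu1 + \<sigma> * x) (mu2 + \<rho> * x + s * z)
     = ((\<sigma> * x)^2 - 2 * \<rho> * \<sigma> * (\<sigma> * x) * (\<rho> * x + s * z) + \<sigma>^2 * (\<rho> * x + s * z)^2) / (\<sigma>^2 * (1 - \<rho>^2))"
    unfolding quadform_def by simp
  ultimately show ?thesis unfolding s_def[symmetric] using assms r by simp
qed

lemma YU_integral:
  fixes g g0 :: "real \<Rightarrow> real" and \<Phi> :: "real \<times> real \<Rightarrow> ennreal"
  assumes [measurable]: "g0 \<in> borel_measurable borel" and g0nn: "\<And>u. g0 u \<ge> 0"
    and g0eq: "\<And>u. u \<ge> 0 \<Longrightarrow> g0 u = g u"
    and sig: "\<sigma> > 0" and rho: "-1 < \<rho>" "\<rho> < 1" and K: "K > 0"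
    and [measurable]: "\<Phi> \<in> borel_measurable (lborel \<Otimes>\<^sub>M lborel)"
  shows "(\<integral>\<^sup>+y. \<integral>\<^sup>+u. ennreal (biv_sym_density g K mu1 mu2 \<sigma> \<rho> y u) * \<Phi> (y, u) \<partial>lborel \<partial>lborel)
     = (\<integral>\<^sup>+x. \<integral>\<^sup>+z. ennreal (g0 (x^2 + z^2) / (pi * K)) * \<Phi> (mu1 + \<sigma> * x, mu2 + \<rho> * x + sqrt (1 - \<rho>^2) * z) \<partial>lborel \<partial>lborel)"
proof -
  have r: "0 < 1 - \<rho>^2" using rho by (auto simp: abs_square_less_1)
  define s where "s = sqrt (1 - \<rho>^2)"
  have s: "0 < s" unfolding s_def using r by simp
  define c where "c = 1 / (sqrt (\<sigma>^2 * (1 - \<rho>^2)) * pi * K)"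
  have c: "c = 1 / (\<sigma> * s * pi * K)" unfolding c_def s_def using sig r by (simp add: real_sqrt_mult)
  define b where "b y u = c * g0 (quadform mu1 mu2 \<sigma> \<rho> y u)" for y u
  have [measurable]: "case_prod b \<in> borel_measurable (lborel \<Otimes>\<^sub>M lborel)" unfolding b_def quadform_def by measurable
  have bb: "biv_sym_density g K mu1 mu2 \<sigma> \<rho> y u = b y u" for y u
    unfolding biv_sym_density_def b_def c_def using g0eq[OF quadform_nonneg[OF sig rho]] by simp
  have "(\<integral>\<^sup>+y. \<integral>\<^sup>+u. ennreal (biv_sym_density g K mu1 mu2 \<sigma> \<rho> y u) * \<Phi> (y, u) \<partial>lborel \<partial>lborel)
     = (\<integral>\<^sup>+y. \<integral>\<^sup>+u. ennreal (b y u) * \<Phi> (y, u) \<partial>lborel \<partial>lborel)" by (simp add: bb)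
  also have "\<dots> = ennreal \<bar>\<sigma>\<bar> * (\<integral>\<^sup>+x. \<integral>\<^sup>+u. ennreal (b (mu1 + \<sigma> * x) u) * \<Phi> (mu1 + \<sigma> * x, u) \<partial>lborel \<partial>lborel)"
    using sig by (intro nn_integral_real_affine) auto
  also have "\<dots> = ennreal \<sigma> * (\<integral>\<^sup>+x. ennreal s * \<integral>\<^sup>+z. ennreal (b (mu1 + \<sigma> * x) (mu2 + \<rho> * x + s * z)) * \<Phi> (mu1 + \<sigma> * x, mu2 + \<rho> * x + s * z) \<partial>lborel \<partial>lborel)"
  proof (intro arg_cong2[where f="(*)"] nn_integral_cong)
    fix x :: real
    have m: "(\<lambda>u. ennreal (b (mu1 + \<sigma> * x) u) * \<Phi> (mu1 + \<sigma> * x, u)) \<in> borel_measurable borel" by measurable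
    show "(\<integral>\<^sup>+u. ennreal (b (mu1 + \<sigma> * x) u) * \<Phi> (mu1 + \<sigma> * x, u) \<partial>lborel) = ennreal s * \<integral>\<^sup>+z. ennreal (b (mu1 + \<sigma> * x) (mu2 + \<rho> * x + s * z)) * \<Phi> (mu1 + \<sigma> * x, mu2 + \<rho> * x + s * z) \<partial>lborel"
      using nn_integral_real_affine[OF m, of s "mu2 + \<rho> * x"] s by simp
  qed (use sig in simp)
  also have "\<dots> = (\<integral>\<^sup>+x. \<integral>\<^sup>+z. ennreal \<sigma> * (ennreal s * (ennreal (b (mu1 + \<sigma> * x) (mu2 + \<rho> * x + s * z)) * \<Phi> (mu1 + \<sigma> * x, mu2 + \<rho> * x + s * z))) \<partial>lborel \<partial>lborel)"
    by (simp add: nn_integral_cmult)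
  also have "\<dots> = (\<integral>\<^sup>+x. \<integral>\<^sup>+z. ennreal (g0 (x^2 + z^2) / (pi * K)) * \<Phi> (mu1 + \<sigma> * x, mu2 + \<rho> * x + s * z) \<partial>lborel \<partial>lborel)"
  proof (intro nn_integral_cong)
    fix x z :: real
    have q: "quadform mu1 mu2 \<sigma> \<rho> (mu1 + \<sigma> * x) (mu2 + \<rho> * x + s * z) = x^2 + z^2"
      using quadform_subst[OF sig rho] unfolding s_def by simp
    have "ennreal \<sigma> * (ennreal s * ennreal (b (mu1 + \<sigma> * x) (mu2 + \<rho> * x + s * z))) = ennreal (\<sigma> * (s * b (mu1 + \<sigma> * x) (mu2 + \<rho> * x + s * z)))"
    proof -
      have bnn: "0 \<le> b (mu1 + \<sigma> * x) (mu2 + \<rho> * x + s * z)" unfolding b_def c using sig s K g0nn by simp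
      have e1: "ennreal (s * b (mu1 + \<sigma> * x) (mu2 + \<rho> * x + s * z)) = ennreal s * ennreal (b (mu1 + \<sigma> * x) (mu2 + \<rho> * x + s * z))"
        using s bnn by (intro ennreal_mult) auto
      have e2: "ennreal (\<sigma> * (s * b (mu1 + \<sigma> * x) (mu2 + \<rho> * x + s * z))) = ennreal \<sigma> * ennreal (s * b (mu1 + \<sigma> * x) (mu2 + \<rho> * x + s * z))"
        using s sig bnn by (intro ennreal_mult) auto
      show ?thesis unfolding e2 e1 ..
    qed
    also have "\<sigma> * (s * b (mu1 + \<sigma> * x) (mu2 + \<rho> * x + s * z)) = g0 (x^2 + z^2) / (pi * K)"
      unfolding b_def q c using sig s by simp
    finally show "ennreal \<sigma> * (ennreal s * (ennreal (b (mu1 + \<sigma> * x) (mu2 + \<rho> * x + s * z)) * \<Phi> (mu1 + \<sigma> * x, mu2 + \<rho> * x + s * z)))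
      = ennreal (g0 (x^2 + z^2) / (pi * K)) * \<Phi> (mu1 + \<sigma> * x, mu2 + \<rho> * x + s * z)"
      by (simp add: mult.assoc[symmetric])
  qed
  finally show ?thesis unfolding s_def .
qed

theorem theorem1:
  fixes M :: "'a measure"
    and g :: "real \<Rightarrow> real"
    and K mu1 mu2 \<sigma> \<rho> :: real
    and Y U V1 V2 R D :: "'a \<Rightarrow> real"
    and fZ1 fS :: "real \<Rightarrow> real"
    and fZ12 :: "real \<Rightarrow> real \<Rightarrow> real"
  assumes P: "prob_space M"
    and g_meas: "set_borel_measurable borel {0..} g"
    and g_nonneg: "\<And>u. u \<ge> 0 \<Longrightarrow> g u \<ge> 0"
    and g_int: "set_integrable lborel {0..} g"
    and K_def: "K = (LINT u:{0..}|lborel. g u)"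
    and K_pos: "0 < K"
    and sigma_pos: "\<sigma> > 0"
    and rho: "-1 < \<rho>" "\<rho> < 1"
    and YU: "distributed M (lborel \<Otimes>\<^sub>M lborel) (\<lambda>\<omega>. (Y \<omega>, U \<omega>))
               (\<lambda>(y, u). ennreal (biv_sym_density g K mu1 mu2 \<sigma> \<rho> y u))"
    and indep: "prob_space.indep_vars M (\<lambda>_. borel) (\<lambda>i. [V1, V2, R, D] ! i) {..<4}"
    and V1: "measure M {\<omega> \<in> space M. V1 \<omega> = -1} = 1/2" "measure M {\<omega> \<in> space M. V1 \<omega> = 1} = 1/2"
    and V2: "measure M {\<omega> \<in> space M. V2 \<omega> = -1} = 1/2" "measure M {\<omega> \<in> space M. V2 \<omega> = 1} = 1/2"
    and Ddist: "distributed M lborel D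
               (\<lambda>d. ennreal (indicator {0<..<1} d * (2 / (pi * sqrt (1 - d^2)))))"
    and Rdist: "distributed M lborel R
               (\<lambda>r. ennreal (indicator {0<..} r * (2 * r * g (r^2) / K)))"
    and fZ1_nonneg: "\<And>z. fZ1 z \<ge> 0"
    and fZ1: "distributed M lborel (\<lambda>\<omega>. R \<omega> * D \<omega> * V1 \<omega>) (\<lambda>z. ennreal (fZ1 z))"
    and fZ12_nonneg: "\<And>z w. fZ12 z w \<ge> 0"
    and fZ12: "distributed M (lborel \<Otimes>\<^sub>M lborel)
               (\<lambda>\<omega>. (R \<omega> * D \<omega> * V1 \<omega>, R \<omega> * sqrt (1 - (D \<omega>)^2) * V2 \<omega>))
               (\<lambda>(z, w). ennreal (fZ12 z w))"
    and fS_nonneg: "\<And>s. fS s \<ge> 0"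
    and fS: "distributed M lborel
               (\<lambda>\<omega>. \<rho> * (R \<omega> * D \<omega> * V1 \<omega>) + sqrt (1 - \<rho>^2) * (R \<omega> * sqrt (1 - (D \<omega>)^2) * V2 \<omega>))
               (\<lambda>s. ennreal (fS s))"
  shows "measure M {\<omega> \<in> space M. U \<omega> > 0} = Hfun fS mu2
    \<and> (measure M {\<omega> \<in> space M. U \<omega> > 0} > 0 \<longrightarrow>
        distributed (uniform_measure M {\<omega> \<in> space M. U \<omega> > 0}) lborel Y
          (\<lambda>y. ennreal
             (if fZ1 ((y - mu1) / \<sigma>) = 0 then 0
              else 1 / \<sigma> * fZ1 ((y - mu1) / \<sigma>)
                   * Gfun fZ12 fZ1 ((y - mu1) / \<sigma>)
                       (mu2 / sqrt (1 - \<rho>^2) + \<rho> / sqrt (1 - \<rho>^2) * ((y - mu1) / \<sigma>))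
                   / Hfun fS mu2)))"
proof -
  interpret prob_space M by (rule P)
  define g0 where "g0 u = indicator {0..} u *\<^sub>R g u" for u
  have g0m[measurable]: "g0 \<in> borel_measurable borel"
    using g_meas unfolding set_borel_measurable_def g0_def by simp
  have g0nn: "\<And>u. g0 u \<ge> 0" using g_nonneg by (auto simp: g0_def indicator_def)
  have g0eq: "\<And>u. u \<ge> 0 \<Longrightarrow> g0 u = g u" by (simp add: g0_def)
  have Rdist0: "distributed M lborel R (\<lambda>r. ennreal (indicator {0<..} r * (2 * r * g0 (r^2) / K)))"
  proof -
    have "(\<lambda>r. ennreal (indicator {0<..} r * (2 * r * g0 (r^2) / K))) = (\<lambda>r. ennreal (indicator {0<..} r * (2 * r * g (r^2) / K)))"
      by (auto simp: fun_eq_iff g0eq)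
    then show ?thesis using Rdist by simp
  qed
  define s where "s = sqrt (1 - \<rho>^2)"
  have r1: "0 < 1 - \<rho>^2" using rho by (auto simp: abs_square_less_1)
  have s: "0 < s" unfolding s_def using r1 by simp
  define Z1 where "Z1 \<omega> = R \<omega> * D \<omega> * V1 \<omega>" for \<omega>
  define Z2 where "Z2 \<omega> = R \<omega> * sqrt (1 - (D \<omega>)^2) * V2 \<omega>" for \<omega>
  note I = indep_extract[OF indep]
  have [measurable]: "V1 \<in> borel_measurable M" "V2 \<in> borel_measurable M" "R \<in> borel_measurable M" "D \<in> borel_measurable M"
    using indep_var_rv1[OF I(2)] indep_var_rv2[OF I(2)] indep_var_rv1[OF I(3)] indep_var_rv2[OF I(3)] by auto
  have [measurable]: "Z1 \<in> borel_measurable M" "Z2 \<in> borel_measurable M" unfolding Z1_def Z2_def by measurable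
  have [measurable]: "Y \<in> borel_measurable M" "U \<in> borel_measurable M"
  proof -
    have pm: "(\<lambda>\<omega>. (Y \<omega>, U \<omega>)) \<in> measurable M (lborel \<Otimes>\<^sub>M lborel)" using YU unfolding distributed_def by simp
    show "Y \<in> borel_measurable M" using measurable_Pair1_compose[OF pm measurable_ident] by simp
    show "U \<in> borel_measurable M" using measurable_Pair2_compose[OF pm measurable_ident] by simp
  qed
  have ZL: "(\<integral>\<^sup>+\<omega>. \<Phi> (Z1 \<omega>, Z2 \<omega>) \<partial>M) = (\<integral>\<^sup>+x. \<integral>\<^sup>+y. ennreal (g0 (x^2 + y^2) / (pi * K)) * \<Phi> (x, y) \<partial>lborel \<partial>lborel)"
    if [measurable]: "\<Phi> \<in> borel_measurable (lborel \<Otimes>\<^sub>M lborel)" for \<Phi>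
    unfolding Z1_def Z2_def by (rule Z_law[OF P g0m g0nn K_pos indep V1 V2 Ddist Rdist0]) measurable
  have YUL: "(\<integral>\<^sup>+\<omega>. \<Phi> (Y \<omega>, U \<omega>) \<partial>M) = (\<integral>\<^sup>+\<omega>. \<Phi> (mu1 + \<sigma> * Z1 \<omega>, mu2 + \<rho> * Z1 \<omega> + s * Z2 \<omega>) \<partial>M)"
    if [measurable]: "\<Phi> \<in> borel_measurable (lborel \<Otimes>\<^sub>M lborel)" for \<Phi>
  proof -
    have bm: "(\<lambda>(y, u). ennreal (biv_sym_density g K mu1 mu2 \<sigma> \<rho> y u)) \<in> borel_measurable (lborel \<Otimes>\<^sub>M lborel)"
      using YU unfolding distributed_def by simp
    have "(\<integral>\<^sup>+\<omega>. \<Phi> (Y \<omega>, U \<omega>) \<partial>M) = (\<integral>\<^sup>+p. (\<lambda>(y, u). ennreal (biv_sym_density g K mu1 mu2 \<sigma> \<rho> y u)) p * \<Phi> p \<partial>(lborel \<Otimes>\<^sub>M lborel))"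
      by (rule distributed_nn_integral[OF YU, symmetric]) measurable
    also have "\<dots> = (\<integral>\<^sup>+y. \<integral>\<^sup>+u. ennreal (biv_sym_density g K mu1 mu2 \<sigma> \<rho> y u) * \<Phi> (y, u) \<partial>lborel \<partial>lborel)"
    proof -
      have m: "(\<lambda>p. (\<lambda>(y, u). ennreal (biv_sym_density g K mu1 mu2 \<sigma> \<rho> y u)) p * \<Phi> p) \<in> borel_measurable (lborel \<Otimes>\<^sub>M lborel)"
        using bm by measurable
      show ?thesis using lborel.nn_integral_fst[OF m] by simp
    qed
    also have "\<dots> = (\<integral>\<^sup>+x. \<integral>\<^sup>+z. ennreal (g0 (x^2 + z^2) / (pi * K)) * \<Phi> (mu1 + \<sigma> * x, mu2 + \<rho> * x + sqrt (1 - \<rho>^2) * z) \<partial>lborel \<partial>lborel)"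
      by (rule YU_integral[OF g0m g0nn g0eq sigma_pos rho K_pos]) measurable
    also have "\<dots> = (\<integral>\<^sup>+\<omega>. \<Phi> (mu1 + \<sigma> * Z1 \<omega>, mu2 + \<rho> * Z1 \<omega> + s * Z2 \<omega>) \<partial>M)"
    proof -
      have m: "(\<lambda>p. \<Phi> (mu1 + \<sigma> * fst p, mu2 + \<rho> * fst p + s * snd p)) \<in> borel_measurable (lborel \<Otimes>\<^sub>M lborel)" by measurable
      show ?thesis using ZL[OF m] unfolding s_def by simp
    qed
    finally show ?thesis .
  qed
  have ZS: "(\<integral>\<^sup>+\<omega>. \<Phi> (Z1 \<omega>, - Z2 \<omega>) \<partial>M) = (\<integral>\<^sup>+\<omega>. \<Phi> (Z1 \<omega>, Z2 \<omega>) \<partial>M)"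
    if [measurable]: "\<Phi> \<in> borel_measurable (lborel \<Otimes>\<^sub>M lborel)" for \<Phi>
  proof -
    have m: "(\<lambda>p. \<Phi> (fst p, - snd p)) \<in> borel_measurable (lborel \<Otimes>\<^sub>M lborel)" by measurable
    have "(\<integral>\<^sup>+\<omega>. \<Phi> (Z1 \<omega>, - Z2 \<omega>) \<partial>M) = (\<integral>\<^sup>+x. \<integral>\<^sup>+y. ennreal (g0 (x^2 + y^2) / (pi * K)) * \<Phi> (x, - y) \<partial>lborel \<partial>lborel)"
      using ZL[OF m] by simp
    also have "\<dots> = (\<integral>\<^sup>+x. \<integral>\<^sup>+y. ennreal (g0 (x^2 + y^2) / (pi * K)) * \<Phi> (x, y) \<partial>lborel \<partial>lborel)"
    proof (rule nn_integral_cong)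
      fix x :: real
      have m2: "(\<lambda>y. ennreal (g0 (x^2 + y^2) / (pi * K)) * \<Phi> (x, - y)) \<in> borel_measurable borel" by measurable
      show "(\<integral>\<^sup>+y. ennreal (g0 (x^2 + y^2) / (pi * K)) * \<Phi> (x, - y) \<partial>lborel) = (\<integral>\<^sup>+y. ennreal (g0 (x^2 + y^2) / (pi * K)) * \<Phi> (x, y) \<partial>lborel)"
        using nn_integral_real_affine[OF m2, of "-1" 0] by simp
    qed
    also have "\<dots> = (\<integral>\<^sup>+\<omega>. \<Phi> (Z1 \<omega>, Z2 \<omega>) \<partial>M)" using ZL[OF that] by simp
    finally show ?thesis .
  qed
  define A0 where "A0 = {\<omega> \<in> space M. U \<omega> > 0}"
  have A0[measurable]: "A0 \<in> sets M" unfolding A0_def by measurable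
  define S where "S \<omega> = \<rho> * (R \<omega> * D \<omega> * V1 \<omega>) + sqrt (1 - \<rho>^2) * (R \<omega> * sqrt (1 - (D \<omega>)^2) * V2 \<omega>)" for \<omega>
  have [measurable]: "S \<in> borel_measurable M" unfolding S_def by measurable
  have E1: "emeasure M A0 = emeasure M {\<omega> \<in> space M. S \<omega> \<in> {-mu2<..}}"
  proof -
    have "emeasure M A0 = (\<integral>\<^sup>+\<omega>. indicator A0 \<omega> \<partial>M)" using A0 by simp
    also have "\<dots> = (\<integral>\<^sup>+\<omega>. indicator {0<..} (snd (Y \<omega>, U \<omega>)) \<partial>M)"
      by (intro nn_integral_cong) (auto simp: A0_def split: split_indicator)
    also have "\<dots> = (\<integral>\<^sup>+\<omega>. indicator {0<..} (snd (mu1 + \<sigma> * Z1 \<omega>, mu2 + \<rho> * Z1 \<omega> + s * Z2 \<omega>)) \<partial>M)"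
      by (rule YUL[of "\<lambda>p. indicator {0<..} (snd p)"]) measurable
    also have "\<dots> = (\<integral>\<^sup>+\<omega>. indicator {\<omega> \<in> space M. S \<omega> \<in> {-mu2<..}} \<omega> \<partial>M)"
      by (intro nn_integral_cong) (auto simp: S_def Z1_def Z2_def s_def split: split_indicator)
    also have "\<dots> = emeasure M {\<omega> \<in> space M. S \<omega> \<in> {-mu2<..}}"
    proof -
      have "{\<omega> \<in> space M. S \<omega> \<in> {-mu2<..}} \<in> sets M" by measurable
      then show ?thesis by simp
    qed
    finally show ?thesis .
  qed
  have M1: "measure M A0 = measure M {\<omega> \<in> space M. S \<omega> \<in> {-mu2<..}}"
    unfolding measure_def E1 ..
  have H: "Hfun fS mu2 = measure M {\<omega> \<in> space M. S \<omega> \<in> {-mu2<..}}"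
  proof -
    have "Hfun fS mu2 = (\<integral>x. fS x * indicator {-mu2<..} x \<partial>lborel)"
      unfolding Hfun_def set_lebesgue_integral_def by (simp add: mult.commute)
    also have "\<dots> = (\<integral>\<omega>. indicator {-mu2<..} (S \<omega>) \<partial>M)"
      unfolding S_def by (rule distributed_integral[OF fS]) (auto simp: fS_nonneg)
    also have "\<dots> = (\<integral>\<omega>. indicator {\<omega> \<in> space M. S \<omega> \<in> {-mu2<..}} \<omega> \<partial>M)"
      by (intro Bochner_Integration.integral_cong) (auto split: split_indicator)
    also have "\<dots> = measure M {\<omega> \<in> space M. S \<omega> \<in> {-mu2<..}}" by simp
    finally show ?thesis .
  qed
  have part1: "measure M {\<omega> \<in> space M. U \<omega> > 0} = Hfun fS mu2"
    using M1 H unfolding A0_def by simp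
  define ac where "ac z = mu2 / sqrt (1 - \<rho>^2) + \<rho> / sqrt (1 - \<rho>^2) * z" for z
  define h where "h = (\<lambda>y. ennreal
             (if fZ1 ((y - mu1) / \<sigma>) = 0 then 0
              else 1 / \<sigma> * fZ1 ((y - mu1) / \<sigma>)
                   * Gfun fZ12 fZ1 ((y - mu1) / \<sigma>)
                       (mu2 / sqrt (1 - \<rho>^2) + \<rho> / sqrt (1 - \<rho>^2) * ((y - mu1) / \<sigma>))
                   / Hfun fS mu2))"
  have part2: "distributed (uniform_measure M {\<omega> \<in> space M. U \<omega> > 0}) lborel Y h"
    if pos: "measure M {\<omega> \<in> space M. U \<omega> > 0} > 0"
  proof -
    have fZ1m[measurable]: "fZ1 \<in> borel_measurable borel"
      using distributed_real_measurable[OF _ fZ1] fZ1_nonneg by simp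
    have fZ12m[measurable]: "case_prod fZ12 \<in> borel_measurable (lborel \<Otimes>\<^sub>M lborel)"
    proof -
      have "(\<lambda>x. ennreal (case_prod fZ12 x)) \<in> borel_measurable (lborel \<Otimes>\<^sub>M lborel)"
        using fZ12 unfolding distributed_def by (simp add: case_prod_beta')
      then have "(\<lambda>x. enn2real (ennreal (case_prod fZ12 x))) \<in> borel_measurable (lborel \<Otimes>\<^sub>M lborel)"
        by measurable
      then show ?thesis using fZ12_nonneg by (simp add: case_prod_beta')
    qed
    have Hpos: "Hfun fS mu2 > 0" using pos part1 by simp
    define H where "H = Hfun fS mu2"
    have H0: "H > 0" unfolding H_def by (rule Hpos)
    have eA0: "emeasure M A0 = ennreal H"
      unfolding H_def part1[symmetric] A0_def by (simp add: emeasure_eq_measure)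
    have fZ12m'[measurable]: "case_prod fZ12 \<in> borel_measurable (borel \<Otimes>\<^sub>M borel)"
    proof -
      have e: "sets (lborel \<Otimes>\<^sub>M lborel) = sets (borel \<Otimes>\<^sub>M (borel :: real measure))"
        by (rule sets_pair_measure_cong) simp_all
      show ?thesis using fZ12m measurable_cong_sets[OF e refl, of borel] by simp
    qed
    have Hm[measurable]: "(\<lambda>x. Hfun fS mu2) \<in> borel_measurable borel" by simp
    have ind_if: "indicator {..t} w *\<^sub>R v = (if w \<le> t then v else 0)" for t w v :: real
      by (simp add: indicator_def)
    have hm[measurable]: "h \<in> borel_measurable borel"
      unfolding h_def Gfun_def set_lebesgue_integral_def ind_if by measurable
    have sf: "sigma_finite_measure lborel" by (rule lborel.sigma_finite_measure_axioms)
    have marg: "AE z in lborel. ennreal (fZ1 z) = (\<integral>\<^sup>+w. ennreal (fZ12 z w) \<partial>lborel)"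
      using prob_space.distributed_marginal_eq_joint1[OF P sf sf fZ1 fZ12] by simp
    define Iz where "Iz z = (\<integral>\<^sup>+w. ennreal (fZ12 z w) * indicator {..ac z} w \<partial>lborel)" for z
    have Izm[measurable]: "Iz \<in> borel_measurable borel" unfolding Iz_def ac_def indicator_def atMost_iff by measurable
    have sac: "s * ac z = mu2 + \<rho> * z" for z
      using s unfolding ac_def s_def[symmetric] by (simp add: field_simps)
    have key: "AE z in lborel. ennreal \<sigma> * h (mu1 + \<sigma> * z) = Iz z / ennreal H"
      using marg
    proof eventually_elim
      case (elim z)
      have cz: "(mu1 + \<sigma> * z - mu1) / \<sigma> = z" using sigma_pos by simp
      have hz: "h (mu1 + \<sigma> * z) = ennreal (if fZ1 z = 0 then 0 else 1 / \<sigma> * fZ1 z * Gfun fZ12 fZ1 z (ac z) / H)"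
        unfolding h_def cz ac_def H_def ..
      show ?case
      proof (cases "fZ1 z = 0")
        case True
        have "Iz z \<le> (\<integral>\<^sup>+w. ennreal (fZ12 z w) \<partial>lborel)" unfolding Iz_def
          by (intro nn_integral_mono) (auto split: split_indicator)
        also have "\<dots> = 0" using elim True by simp
        finally have "Iz z = 0" by simp
        then show ?thesis using hz True by simp
      next
        case False
        then have f0: "fZ1 z > 0" using fZ1_nonneg[of z] by simp
        have mw[measurable]: "(\<lambda>w. fZ12 z w) \<in> borel_measurable borel" by measurable
        have int: "integrable lborel (\<lambda>w. fZ12 z w)"
        proof (rule integrableI_nonneg)
          show "(\<integral>\<^sup>+w. ennreal (fZ12 z w) \<partial>lborel) < \<infinity>" using elim[symmetric] by simp
        qed (auto simp: fZ12_nonneg)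
        define L where "L = (\<integral>w. indicator {..ac z} w *\<^sub>R fZ12 z w \<partial>lborel)"
        have intL: "integrable lborel (\<lambda>w. indicator {..ac z} w *\<^sub>R fZ12 z w)"
          by (rule integrable_mult_indicator) (auto simp: int)
        have L: "ennreal L = Iz z"
        proof -
          have "(\<integral>\<^sup>+w. ennreal (indicator {..ac z} w *\<^sub>R fZ12 z w) \<partial>lborel) = ennreal L"
            unfolding L_def by (rule nn_integral_eq_integral[OF intL]) (auto simp: fZ12_nonneg)
          moreover have "(\<integral>\<^sup>+w. ennreal (indicator {..ac z} w *\<^sub>R fZ12 z w) \<partial>lborel) = Iz z"
            unfolding Iz_def by (intro nn_integral_cong) (auto split: split_indicator)
          ultimately show ?thesis by simp
        qed
        have Lnn: "0 \<le> L" unfolding L_def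
          by (intro Bochner_Integration.integral_nonneg) (auto simp: fZ12_nonneg)
        have G: "Gfun fZ12 fZ1 z (ac z) = L / fZ1 z"
        proof -
          have "Gfun fZ12 fZ1 z (ac z) = (\<integral>w. (indicator {..ac z} w *\<^sub>R fZ12 z w) / fZ1 z \<partial>lborel)"
            unfolding Gfun_def set_lebesgue_integral_def by (intro Bochner_Integration.integral_cong) auto
          then show ?thesis unfolding L_def by simp
        qed
        have r: "1 / \<sigma> * fZ1 z * (L / fZ1 z) / H = L / (\<sigma> * H)" using f0 sigma_pos by (simp add: field_simps)
        have "ennreal \<sigma> * h (mu1 + \<sigma> * z) = ennreal \<sigma> * ennreal (L / (\<sigma> * H))"
          unfolding hz G using False r by simp
        also have "\<dots> = ennreal (\<sigma> * (L / (\<sigma> * H)))"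
          using sigma_pos Lnn H0 by (intro ennreal_mult[symmetric]) auto
        also have "\<sigma> * (L / (\<sigma> * H)) = L / H" using sigma_pos by simp
        also have "ennreal (L / H) = ennreal L / ennreal H" using Lnn H0 by (simp add: divide_ennreal)
        finally show ?thesis unfolding L .
      qed
    qed
    have NB: "emeasure M (A0 \<inter> (Y -` B \<inter> space M)) = (\<integral>\<^sup>+z. indicator B (mu1 + \<sigma> * z) * Iz z \<partial>lborel)"
      if B[measurable]: "B \<in> sets borel" for B
    proof -
      define \<Phi>B where "\<Phi>B p = (indicator B (fst p) * indicator {0<..} (snd p) :: ennreal)" for p :: "real \<times> real"
      have [measurable]: "\<Phi>B \<in> borel_measurable (lborel \<Otimes>\<^sub>M lborel)" unfolding \<Phi>B_def by measurable
      define \<Phi>' where "\<Phi>' p = \<Phi>B (mu1 + \<sigma> * fst p, mu2 + \<rho> * fst p - s * snd p)" for p :: "real \<times> real"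
      have [measurable]: "\<Phi>' \<in> borel_measurable (lborel \<Otimes>\<^sub>M lborel)" unfolding \<Phi>'_def by measurable
      have AB: "A0 \<inter> (Y -` B \<inter> space M) \<in> sets M" by measurable
      have "emeasure M (A0 \<inter> (Y -` B \<inter> space M)) = (\<integral>\<^sup>+\<omega>. indicator (A0 \<inter> (Y -` B \<inter> space M)) \<omega> \<partial>M)"
        using AB by simp
      also have "\<dots> = (\<integral>\<^sup>+\<omega>. \<Phi>B (Y \<omega>, U \<omega>) \<partial>M)"
        by (intro nn_integral_cong) (auto simp: \<Phi>B_def A0_def split: split_indicator)
      also have "\<dots> = (\<integral>\<^sup>+\<omega>. \<Phi>B (mu1 + \<sigma> * Z1 \<omega>, mu2 + \<rho> * Z1 \<omega> + s * Z2 \<omega>) \<partial>M)"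
        by (rule YUL) measurable
      also have "\<dots> = (\<integral>\<^sup>+\<omega>. \<Phi>' (Z1 \<omega>, - Z2 \<omega>) \<partial>M)" by (simp add: \<Phi>'_def)
      also have "\<dots> = (\<integral>\<^sup>+\<omega>. \<Phi>' (Z1 \<omega>, Z2 \<omega>) \<partial>M)" by (rule ZS) measurable
      also have "\<dots> = (\<integral>\<^sup>+p. (\<lambda>(z, w). ennreal (fZ12 z w)) p * \<Phi>' p \<partial>(lborel \<Otimes>\<^sub>M lborel))"
        unfolding Z1_def Z2_def by (rule distributed_nn_integral[OF fZ12, symmetric]) measurable
      also have "\<dots> = (\<integral>\<^sup>+z. \<integral>\<^sup>+w. ennreal (fZ12 z w) * \<Phi>' (z, w) \<partial>lborel \<partial>lborel)"
      proof -
        have m: "(\<lambda>p. (\<lambda>(z, w). ennreal (fZ12 z w)) p * \<Phi>' p) \<in> borel_measurable (lborel \<Otimes>\<^sub>M lborel)"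
          by measurable
        show ?thesis using lborel.nn_integral_fst[OF m] by simp
      qed
      also have "\<dots> = (\<integral>\<^sup>+z. indicator B (mu1 + \<sigma> * z) * Iz z \<partial>lborel)"
      proof (rule nn_integral_cong)
        fix z :: real
        have "(\<integral>\<^sup>+w. ennreal (fZ12 z w) * \<Phi>' (z, w) \<partial>lborel) = (\<integral>\<^sup>+w. indicator B (mu1 + \<sigma> * z) * (ennreal (fZ12 z w) * indicator {..ac z} w) \<partial>lborel)"
          using AE_lborel_singleton[of "ac z"]
        proof (rule nn_integral_cong_AE[OF eventually_mono])
          fix w assume w: "w \<noteq> ac z"
          have "(0 < mu2 + \<rho> * z - s * w) \<longleftrightarrow> s * w < s * ac z" unfolding sac by auto
          also have "\<dots> \<longleftrightarrow> w < ac z" using s by simp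
          also have "\<dots> \<longleftrightarrow> w \<le> ac z" using w by auto
          finally show "ennreal (fZ12 z w) * \<Phi>' (z, w) = indicator B (mu1 + \<sigma> * z) * (ennreal (fZ12 z w) * indicator {..ac z} w)"
            unfolding \<Phi>'_def \<Phi>B_def by (auto split: split_indicator)
        qed
        also have "\<dots> = indicator B (mu1 + \<sigma> * z) * Iz z"
          unfolding Iz_def by (rule nn_integral_cmult) measurable
        finally show "(\<integral>\<^sup>+w. ennreal (fZ12 z w) * \<Phi>' (z, w) \<partial>lborel) = indicator B (mu1 + \<sigma> * z) * Iz z" .
      qed
      finally show ?thesis .
    qed
    have Ym: "Y \<in> measurable (uniform_measure M A0) lborel" by measurable
    show ?thesis
      unfolding distributed_def A0_def[symmetric]
    proof (intro conjI)
      show "h \<in> borel_measurable lborel" by measurable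
      show "Y \<in> measurable (uniform_measure M A0) lborel" by (rule Ym)
      show "distr (uniform_measure M A0) lborel Y = density lborel h"
      proof (rule measure_eqI)
        fix B assume "B \<in> sets (distr (uniform_measure M A0) lborel Y)"
        then have B[measurable]: "B \<in> sets borel" by simp
        have "emeasure (distr (uniform_measure M A0) lborel Y) B = emeasure (uniform_measure M A0) (Y -` B \<inter> space M)"
          by (subst emeasure_distr) (auto intro: Ym)
        also have "\<dots> = emeasure M (A0 \<inter> (Y -` B \<inter> space M)) / emeasure M A0"
          by (rule emeasure_uniform_measure) measurable
        also have "\<dots> = (\<integral>\<^sup>+z. indicator B (mu1 + \<sigma> * z) * Iz z \<partial>lborel) / ennreal H"
          unfolding NB[OF B] eA0 ..
        finally have lhs: "emeasure (distr (uniform_measure M A0) lborel Y) B = (\<integral>\<^sup>+z. indicator B (mu1 + \<sigma> * z) * Iz z \<partial>lborel) / ennreal H" .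
        have mhB: "(\<lambda>y. h y * indicator B y) \<in> borel_measurable borel" by measurable
        have "emeasure (density lborel h) B = (\<integral>\<^sup>+y. h y * indicator B y \<partial>lborel)"
          by (rule emeasure_density) measurable
        also have "\<dots> = ennreal \<bar>\<sigma>\<bar> * (\<integral>\<^sup>+z. h (mu1 + \<sigma> * z) * indicator B (mu1 + \<sigma> * z) \<partial>lborel)"
          using nn_integral_real_affine[OF mhB, of \<sigma> mu1] sigma_pos by simp
        also have "\<dots> = (\<integral>\<^sup>+z. (ennreal \<sigma> * h (mu1 + \<sigma> * z)) * indicator B (mu1 + \<sigma> * z) \<partial>lborel)"
          using sigma_pos by (subst nn_integral_cmult[symmetric]) (measurable, simp add: mult.assoc)
        also have "\<dots> = (\<integral>\<^sup>+z. (Iz z / ennreal H) * indicator B (mu1 + \<sigma> * z) \<partial>lborel)"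
          using key by (intro nn_integral_cong_AE) (auto elim: eventually_mono)
        also have "\<dots> = (\<integral>\<^sup>+z. (indicator B (mu1 + \<sigma> * z) * Iz z) / ennreal H \<partial>lborel)"
          by (intro nn_integral_cong) (simp add: ennreal_divide_times ennreal_times_divide mult.commute)
        also have "\<dots> = (\<integral>\<^sup>+z. indicator B (mu1 + \<sigma> * z) * Iz z \<partial>lborel) / ennreal H"
          by (rule nn_integral_divide) measurable
        finally show "emeasure (distr (uniform_measure M A0) lborel Y) B = emeasure (density lborel h) B"
          using lhs by simp
      qed simp
    qed
  qed
  show ?thesis using part1 part2 unfolding h_def by blast
qed


end
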